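(* Let $p\ge 7$ be a prime. Then $$\sum_{k=1}^{p-1}\frac{H_k^2}{k^2}\equiv -\sum_{1\le i<j<k\le p-1}\frac{1}{ij^2k}\pmod{p}.$$
   Context: $H_n=\sum_{k=1}^n 1/k$. Congruences modulo $p$ are taken in the ring of rationals with denominators not divisible by $p$. *)

theory Defs
  imports Complex_Main "HOL-Computational_Algebra.Primes"
begin

definition H :: "nat \<Rightarrow> rat" where
  "H n = (\<Sum>k=1..n. 1 / of_nat k)"

text \<open>Congruence modulo p in the ring of rationals whose denominators are not divisible by p:
  a - b = c / d with p dividing c and p not dividing d.\<close>
definition rat_cong :: "rat \<Rightarrow> rat \<Rightarrow> nat \<Rightarrow> bool" where
  "rat_cong a b p \<longleftrightarrow> (\<exists>c d :: int. a - b = of_int c / of_int d \<and> int p dvd c \<and> \<not> int p dvd d)"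

end

theory Submission
  imports Defs "HOL-Number_Theory.Cong" "HOL-Computational_Algebra.Primes"
begin


definition t21 :: "nat \<Rightarrow> rat" where "t21 n = (\<Sum>k=1..n. H (k-1) / (of_nat k)^2)"
definition t31 :: "nat \<Rightarrow> rat" where "t31 n = (\<Sum>k=1..n. H (k-1) / (of_nat k)^3)"
definition t4 :: "nat \<Rightarrow> rat" where "t4 n = (\<Sum>k=1..n. 1 / (of_nat k)^4)"
definition t121 :: "nat \<Rightarrow> rat" where "t121 n = (\<Sum>k=1..n. t21 (k-1) / of_nat k)"
definition LL :: "nat \<Rightarrow> rat" where "LL n = (\<Sum>k=1..n. (H k)^2 / (of_nat k)^2)"

lemma H_Suc: "H (Suc n) = H n + 1 / of_nat (Suc n)"
  by (simp add: H_def)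

lemma ident: "LL n + t121 n = H n * t21 n + t31 n + t4 n"
proof (induction n)
  case 0
  then show ?case by (simp add: LL_def t121_def H_def t21_def t31_def t4_def)
next
  case (Suc n)
  have a: "LL (Suc n) = LL n + (H (Suc n))^2 / (of_nat (Suc n))^2" by (simp add: LL_def)
  have b: "t121 (Suc n) = t121 n + t21 n / of_nat (Suc n)" by (simp add: t121_def)
  have c: "t21 (Suc n) = t21 n + H n / (of_nat (Suc n))^2" by (simp add: t21_def)
  have d: "t31 (Suc n) = t31 n + H n / (of_nat (Suc n))^3" by (simp add: t31_def)
  have e: "t4 (Suc n) = t4 n + 1 / (of_nat (Suc n))^4" by (simp add: t4_def)
  have pos: "(of_nat (Suc n) :: rat) \<noteq> 0" by simp
  have key: "\<And>(h::rat) x L t1 t2 t3 t4. x \<noteq> 0 \<Longrightarrow> L + t1 = h*t2 + t3 + t4 \<Longrightarrow>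
     (L + (h+1/x)^2/x^2) + (t1 + t2/x) = (h+1/x)*(t2 + h/x^2) + (t3 + h/x^3) + (t4 + 1/x^4)"
  proof -
    fix h x L t1 t2 t3 t4 :: rat
    assume x: "x \<noteq> 0" and e: "L + t1 = h*t2 + t3 + t4"
    have L: "L = h*t2 + t3 + t4 - t1" using e by simp
    show "(L + (h+1/x)^2/x^2) + (t1 + t2/x) = (h+1/x)*(t2 + h/x^2) + (t3 + h/x^3) + (t4 + 1/x^4)"
      unfolding L using x by (simp add: field_simps) (simp add: eval_nat_numeral algebra_simps)
  qed
  show ?case unfolding a b c d e H_Suc by (rule key[OF pos Suc.IH])
qed

lemma trip: "(\<Sum>(i,j,k)\<in>{(i,j,k). 1 \<le> i \<and> i < j \<and> j < k \<and> k \<le> n}.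
                 1 / (of_nat i * (of_nat j)^2 * of_nat k) :: rat) = t121 n"
proof -
  let ?f = "\<lambda>(i,j,k). 1 / (of_nat i * (of_nat j)^2 * of_nat k) :: rat"
  let ?g = "\<lambda>(k::nat,j::nat,i::nat). (i,j,k)"
  let ?S = "SIGMA k:{1..n}. SIGMA j:{1..<k}. {1..<j}"
  have set: "{(i,j,k). 1 \<le> i \<and> i < j \<and> j < k \<and> k \<le> n} = ?g ` ?S"
    by (auto simp: image_iff)
  have inj: "inj_on ?g ?S" by (auto simp: inj_on_def)
  have "(\<Sum>x\<in>{(i,j,k). 1 \<le> i \<and> i < j \<and> j < k \<and> k \<le> n}. ?f x) = (\<Sum>x\<in>?S. ?f (?g x))"
    unfolding set by (rule sum.reindex[OF inj, unfolded comp_def])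
  also have "\<dots> = (\<Sum>k=1..n. \<Sum>j=1..<k. \<Sum>i=1..<j. 1 / (of_nat i * (of_nat j)^2 * of_nat k))"
    by (simp add: sum.Sigma split_def)
  also have "\<dots> = t121 n"
    unfolding t121_def t21_def H_def
  proof (rule sum.cong[OF refl])
    fix k assume "k \<in> {1..n}"
    show "(\<Sum>j=1..<k. \<Sum>i=1..<j. 1 / (of_nat i * (of_nat j)^2 * of_nat k)) =
       (\<Sum>j=1..k-1. (\<Sum>i=1..j-1. 1 / of_nat i) / (of_nat j)^2) / (of_nat k :: rat)"
    proof -
      have "{1..<j} = {1..j-1}" for j :: nat by (cases j) auto
      then have "(\<Sum>j=1..<k. \<Sum>i=1..<j. 1 / (of_nat i * (of_nat j)^2 * of_nat k)) =
       (\<Sum>j=1..k-1. \<Sum>i=1..j-1. 1 / (of_nat i * (of_nat j)^2 * of_nat k) :: rat)" by simp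
      also have "\<dots> = (\<Sum>j=1..k-1. \<Sum>i=1..j-1. 1 / of_nat i / (of_nat j)^2 / of_nat k)"
        by (simp add: divide_divide_eq_left)
      also have "\<dots> = (\<Sum>j=1..k-1. (\<Sum>i=1..j-1. 1 / of_nat i) / (of_nat j)^2) / of_nat k"
        by (simp add: sum_divide_distrib)
      finally show ?thesis .
    qed
  qed
  finally show ?thesis .
qed


definition NN :: "nat \<Rightarrow> int" where "NN p = fact (p-1)"
definition ee :: "nat \<Rightarrow> nat \<Rightarrow> int" where "ee p k = NN p div int k"
definition EE :: "nat \<Rightarrow> nat \<Rightarrow> int" where "EE p m = (\<Sum>k=1..m. ee p k)"

lemma ee_mul: assumes "1 \<le> k" "k \<le> p - 1" shows "int k * ee p k = NN p"
proof -
  have "k dvd fact (p-1)" using dvd_fact assms by blast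
  then have "int k dvd NN p" unfolding NN_def by (metis of_nat_dvd_iff of_nat_fact)
  then show ?thesis unfolding ee_def by simp
qed

lemma ee_rat: assumes "1 \<le> k" "k \<le> p - 1" shows "(of_int (ee p k) :: rat) = of_int (NN p) / of_nat k"
proof -
  have "(of_int (int k * ee p k) :: rat) = of_int (NN p)" using ee_mul[OF assms] by simp
  then show ?thesis using assms by (simp add: field_simps)
qed

lemma ndvd_k: assumes "prime p" "1 \<le> k" "k \<le> p - 1" shows "\<not> int p dvd int k"
proof
  assume "int p dvd int k"
  then have "p dvd k" by simp
  then have "p \<le> k" using assms(2) by (intro dvd_imp_le) auto
  then show False using assms(3) prime_gt_0_nat[OF assms(1)] by linarith
qed

lemma cancel_k:
  assumes "prime p" "1 \<le> k" "k \<le> p - 1" "int p dvd int k * x" shows "int p dvd x"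
proof -
  have "prime (int p)" using assms(1) by simp
  then show ?thesis using assms(4) ndvd_k[OF assms(1-3)] prime_dvd_mult_iff by blast
qed

lemma ee_refl: assumes "prime p" "1 \<le> k" "k \<le> p - 1"
  shows "[ee p (p-k) = - ee p k] (mod int p)"
proof -
  have a: "int (p-k) * ee p (p-k) = NN p" using ee_mul[of "p-k" p] assms by simp
  have b: "int k * ee p k = NN p" using ee_mul assms by simp
  have "int (p-k) = int p - int k" using assms by simp
  with a b have "int k * (ee p (p-k) + ee p k) = int p * ee p (p-k)" by (simp add: algebra_simps)
  then have "int k * (ee p (p-k) - (- ee p k)) = int p * ee p (p-k)" by simp
  then have "int p dvd int k * (ee p (p-k) - (- ee p k))" by (metis dvd_triv_left)
  then have "int p dvd (ee p (p-k) - (- ee p k))" by (rule cancel_k[OF assms])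
  then show ?thesis by (simp only: cong_iff_dvd_diff)
qed

definition sg :: "nat \<Rightarrow> nat \<Rightarrow> nat" where "sg p k = (2*k) mod p"

lemma sg_range: assumes "prime p" "p \<ge> 7" "1 \<le> k" "k \<le> p - 1" shows "1 \<le> sg p k \<and> sg p k \<le> p - 1"
proof -
  have "p > 0" using assms by simp
  have "sg p k < p" unfolding sg_def using \<open>p>0\<close> by simp
  moreover have "sg p k \<noteq> 0"
  proof
    assume "sg p k = 0"
    then have "p dvd 2*k" unfolding sg_def by auto
    then have "p dvd 2 \<or> p dvd k" using assms(1) prime_dvd_mult_iff by blast
    moreover have "\<not> p dvd 2" using assms(2) dvd_imp_le[of p 2] by linarith
    moreover have "\<not> p dvd k" using ndvd_k[OF assms(1,3,4)] by simp
    ultimately show False by blast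
  qed
  ultimately show ?thesis by simp
qed

lemma sg_cong: assumes "prime p" "p \<ge> 7" "1 \<le> k" "k \<le> p - 1"
  shows "[2 * ee p (sg p k) = ee p k] (mod int p)"
proof -
  obtain r where r: "1 \<le> sg p k" "sg p k \<le> p - 1" using sg_range[OF assms] by blast
  have a: "int (sg p k) * ee p (sg p k) = NN p" using ee_mul[OF r] .
  have b: "int k * ee p k = NN p" using ee_mul assms by simp
  have c: "2*k = p * ((2*k) div p) + sg p k" unfolding sg_def by simp
  then have c': "2 * int k = int p * int ((2*k) div p) + int (sg p k)" by (metis of_nat_add of_nat_mult of_nat_numeral)
  have "int k * (2 * ee p (sg p k) - ee p k) = (2 * int k) * ee p (sg p k) - int k * ee p k" by (simp add: algebra_simps)
  also have "\<dots> = int p * (int ((2*k) div p) * ee p (sg p k))" unfolding c' using a b by (simp add: algebra_simps)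
  finally have "int p dvd int k * (2 * ee p (sg p k) - ee p k)" by (metis dvd_triv_left)
  then have "int p dvd (2 * ee p (sg p k) - ee p k)" by (rule cancel_k[OF assms(1,3,4)])
  then show ?thesis by (simp only: cong_iff_dvd_diff)
qed

lemma sg_inj: assumes "prime p" "p \<ge> 7" shows "inj_on (sg p) {1..p-1}"
proof (rule inj_onI)
  fix a b assume a: "a \<in> {1..p-1}" and b: "b \<in> {1..p-1}" and e: "sg p a = sg p b"
  have "[2*a = 2*b] (mod p)" using e unfolding sg_def cong_def .
  moreover have "coprime 2 p"
  proof -
    have "\<not> p dvd 2" using assms(2) dvd_imp_le[of p 2] by linarith
    then have "coprime p 2" using prime_imp_coprime[OF assms(1)] by blast
    then show ?thesis by (simp add: ac_simps)
  qed
  ultimately have "[a = b] (mod p)" using cong_mult_lcancel_nat by blast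
  moreover have "a < p" "b < p" using a b prime_gt_0_nat[OF assms(1)] by auto
  ultimately show "a = b" using cong_less_modulus_unique_nat by blast
qed

lemma sg_img: assumes "prime p" "p \<ge> 7" shows "sg p ` {1..p-1} = {1..p-1}"
  by (rule endo_inj_surj) (use sg_range[OF assms] sg_inj[OF assms] in auto)

lemma sum_sg: assumes "prime p" "p \<ge> 7"
  shows "(\<Sum>k=1..p-1. f (sg p k)) = (\<Sum>k=1..p-1. f k)"
proof -
  have "(\<Sum>k=1..p-1. f k) = (\<Sum>k\<in>sg p ` {1..p-1}. f k)" using sg_img[OF assms] by simp
  also have "\<dots> = (\<Sum>k=1..p-1. f (sg p k))" by (rule sum.reindex[OF sg_inj[OF assms], unfolded comp_def])
  finally show ?thesis by simp
qed

lemma EE_dvd: assumes "prime p" "p \<ge> 7" shows "int p dvd EE p (p-1)"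
proof -
  have "[(\<Sum>k=1..p-1. 2 * ee p (sg p k)) = (\<Sum>k=1..p-1. ee p k)] (mod int p)"
    by (rule cong_sum) (use sg_cong[OF assms] in auto)
  moreover have "(\<Sum>k=1..p-1. 2 * ee p (sg p k)) = 2 * (\<Sum>k=1..p-1. ee p k)"
    using sum_sg[OF assms, of "\<lambda>k. 2 * ee p k"] by (simp add: sum_distrib_left)
  ultimately have "int p dvd 2 * EE p (p-1) - EE p (p-1)" unfolding EE_def by (simp add: cong_iff_dvd_diff)
  then show ?thesis by simp
qed

definition BB :: "nat \<Rightarrow> int" where "BB p = (\<Sum>k=1..p-1. (ee p k)^4)"

lemma BB_dvd: assumes "prime p" "p \<ge> 7" shows "int p dvd BB p"
proof -
  have "[(\<Sum>k=1..p-1. (2 * ee p (sg p k))^4) = (\<Sum>k=1..p-1. (ee p k)^4)] (mod int p)"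
  proof (rule cong_sum)
    fix k assume "k \<in> {1..p-1}"
    show "[(2 * ee p (sg p k))^4 = (ee p k)^4] (mod int p)"
      by (rule cong_pow[OF sg_cong[OF assms]]) (use \<open>k \<in> {1..p-1}\<close> in auto)
  qed
  moreover have "(\<Sum>k=1..p-1. (2 * ee p (sg p k))^4) = 16 * (\<Sum>k=1..p-1. (ee p k)^4)"
    using sum_sg[OF assms, of "\<lambda>k. 16 * (ee p k)^4"] by (simp add: sum_distrib_left power_mult_distrib)
  ultimately have "int p dvd 16 * BB p - BB p" unfolding BB_def by (simp add: cong_iff_dvd_diff)
  then have d: "int p dvd 15 * BB p" by simp
  have pr: "prime (int p)" using assms(1) by simp
  have "\<not> int p dvd 15"
  proof
    assume "int p dvd 15"
    then have "p dvd 15" by (metis int_dvd_int_iff of_nat_numeral)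
    then have "p dvd 3 * 5" by simp
    then have "p dvd 3 \<or> p dvd 5" using assms(1) prime_dvd_mult_iff by blast
    then show False using assms(2) dvd_imp_le[of p 3] dvd_imp_le[of p 5] by auto
  qed
  then show ?thesis using d pr prime_dvd_mult_iff by blast
qed

lemma EE_refl: assumes "prime p" "p \<ge> 7" shows "k \<le> p - 1 \<Longrightarrow> [EE p (p-1-k) = EE p k] (mod int p)"
proof (induction k)
  case 0
  then show ?case using EE_dvd[OF assms] by (simp add: EE_def cong_0_iff)
next
  case (Suc k)
  then have IH: "[EE p (p-1-k) = EE p k] (mod int p)" by simp
  have eq: "p-1-k = Suc (p-1-Suc k)" using Suc.prems by simp
  have e1: "EE p (p-1-k) = EE p (p-1-Suc k) + ee p (p - Suc k)"
    unfolding EE_def eq using eq by simp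
  have r: "[ee p (p - Suc k) = - ee p (Suc k)] (mod int p)" using ee_refl[OF assms(1), of "Suc k"] Suc.prems by simp
  have "[EE p (p-1-k) - ee p (p - Suc k) = EE p k - (- ee p (Suc k))] (mod int p)"
    by (rule cong_diff[OF IH r])
  moreover have "EE p (p-1-k) - ee p (p - Suc k) = EE p (p-1-Suc k)" using e1 by simp
  moreover have "EE p k - (- ee p (Suc k)) = EE p (Suc k)" unfolding EE_def by simp
  ultimately show ?case by simp
qed

definition AA :: "nat \<Rightarrow> int" where "AA p = (\<Sum>k=1..p-1. (ee p k)^3 * EE p (k-1))"

lemma AA_cong: assumes "prime p" "p \<ge> 7" shows "[AA p = - AA p - BB p] (mod int p)"
proof -
  have p1: "p \<ge> 1" using assms by simp
  have "AA p = (\<Sum>k=1..p-1. (ee p (p-k))^3 * EE p (p-k-1))"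
    unfolding AA_def using sum.atLeastAtMost_rev[of "\<lambda>k. (ee p k)^3 * EE p (k-1)" 1 "p-1"] p1
    by simp
  also have "[\<dots> = (\<Sum>k=1..p-1. - ((ee p k)^3 * EE p (k-1)) - (ee p k)^4)] (mod int p)"
  proof (rule cong_sum)
    fix k assume k: "k \<in> {1..p-1}"
    have h1: "[(ee p (p-k))^3 = (- ee p k)^3] (mod int p)"
      by (rule cong_pow, rule ee_refl[OF assms(1)]) (use k in auto)
    have h2: "[EE p (p-1-k) = EE p k] (mod int p)" by (rule EE_refl[OF assms]) (use k in auto)
    have c: "[(ee p (p-k))^3 * EE p (p-1-k) = (- ee p k)^3 * EE p k] (mod int p)"
      by (rule cong_mult[OF h1 h2])
    have pk: "p-k-1 = p-1-k" by simp
    have eqE: "EE p k = EE p (k-1) + ee p k"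
      unfolding EE_def using k by (cases k) auto
    have eqr: "(- ee p k)^3 * EE p k = - ((ee p k)^3 * EE p (k-1)) - (ee p k)^4"
      unfolding eqE by (simp add: algebra_simps eval_nat_numeral)
    show "[(ee p (p-k))^3 * EE p (p-k-1) = - ((ee p k)^3 * EE p (k-1)) - (ee p k)^4] (mod int p)"
      unfolding pk eqr[symmetric] by (rule c)
  qed
  also have "(\<Sum>k=1..p-1. - ((ee p k)^3 * EE p (k-1)) - (ee p k)^4) = - AA p - BB p"
    unfolding AA_def BB_def by (simp add: sum_subtractf sum_negf)
  finally show ?thesis .
qed

lemma AA_dvd: assumes "prime p" "p \<ge> 7" shows "int p dvd AA p"
proof -
  have "int p dvd AA p - (- AA p - BB p)" using AA_cong[OF assms] by (simp add: cong_iff_dvd_diff)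
  then have "int p dvd 2 * AA p + BB p" by (simp add: algebra_simps)
  then have d: "int p dvd 2 * AA p" using BB_dvd[OF assms] by (metis dvd_add_left_iff)
  have pr: "prime (int p)" using assms(1) by simp
  have "\<not> int p dvd 2"
  proof
    assume "int p dvd 2"
    then have "p dvd 2" by (metis int_dvd_int_iff of_nat_numeral)
    then show False using assms(2) dvd_imp_le[of p 2] by auto
  qed
  then show ?thesis using d pr prime_dvd_mult_iff by blast
qed


definition XX :: "nat \<Rightarrow> int" where "XX p = (\<Sum>k=1..p-1. (ee p k)^2 * EE p (k-1))"

lemma NH: assumes "m \<le> p - 1" shows "(of_int (NN p) :: rat) * H m = of_int (EE p m)"
proof -
  have "(of_int (NN p) :: rat) * H m = (\<Sum>k=1..m. of_int (NN p) / of_nat k)"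
    unfolding H_def by (simp add: sum_distrib_left)
  also have "\<dots> = (\<Sum>k=1..m. of_int (ee p k))"
    by (rule sum.cong[OF refl]) (use ee_rat assms in auto)
  finally show ?thesis unfolding EE_def by simp
qed

lemma Nt21: "(of_int (NN p) :: rat)^3 * t21 (p-1) = of_int (XX p)"
proof -
  let ?N = "(of_int (NN p) :: rat)"
  have "?N^3 * t21 (p-1) = (\<Sum>k=1..p-1. (?N / of_nat k)^2 * (?N * H (k-1)))"
    unfolding t21_def sum_distrib_left
    by (rule sum.cong[OF refl]) (simp add: field_simps power2_eq_square power3_eq_cube)
  also have "\<dots> = (\<Sum>k=1..p-1. of_int ((ee p k)^2 * EE p (k-1)))"
    by (rule sum.cong[OF refl]) (use ee_rat NH in auto)
  finally show ?thesis unfolding XX_def by simp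
qed

lemma Nt31: "(of_int (NN p) :: rat)^4 * t31 (p-1) = of_int (AA p)"
proof -
  let ?N = "(of_int (NN p) :: rat)"
  have "?N^4 * t31 (p-1) = (\<Sum>k=1..p-1. (?N / of_nat k)^3 * (?N * H (k-1)))"
    unfolding t31_def sum_distrib_left
    by (rule sum.cong[OF refl]) (simp add: field_simps power3_eq_cube power4_eq_xxxx)
  also have "\<dots> = (\<Sum>k=1..p-1. of_int ((ee p k)^3 * EE p (k-1)))"
    by (rule sum.cong[OF refl]) (use ee_rat NH in auto)
  finally show ?thesis unfolding AA_def by simp
qed

lemma Nt4: "(of_int (NN p) :: rat)^4 * t4 (p-1) = of_int (BB p)"
proof -
  let ?N = "(of_int (NN p) :: rat)"
  have "?N^4 * t4 (p-1) = (\<Sum>k=1..p-1. (?N / of_nat k)^4)"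
    unfolding t4_def sum_distrib_left
    by (rule sum.cong[OF refl]) (simp add: field_simps power4_eq_xxxx)
  also have "\<dots> = (\<Sum>k=1..p-1. of_int ((ee p k)^4))"
    by (rule sum.cong[OF refl]) (use ee_rat in auto)
  finally show ?thesis unfolding BB_def by simp
qed

theorem lemma2p8:
  fixes p :: nat
  assumes "prime p" and "p \<ge> 7"
  shows "rat_cong (\<Sum>k=1..p-1. (H k)^2 / (of_nat k)^2)
           (- (\<Sum>(i,j,k)\<in>{(i,j,k). 1 \<le> i \<and> i < j \<and> j < k \<and> k \<le> p-1}.
                 1 / (of_nat i * (of_nat j)^2 * of_nat k))) p"
proof -
  let ?N = "(of_int (NN p) :: rat)"
  define c where "c = EE p (p-1) * XX p + AA p + BB p"
  have Npos: "NN p > 0" unfolding NN_def by simp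
  then have N0: "?N \<noteq> 0" by simp
  have diff: "(\<Sum>k=1..p-1. (H k)^2 / (of_nat k)^2) -
           (- (\<Sum>(i,j,k)\<in>{(i,j,k). 1 \<le> i \<and> i < j \<and> j < k \<and> k \<le> p-1}.
                 1 / (of_nat i * (of_nat j)^2 * of_nat k))) = LL (p-1) + t121 (p-1)"
    unfolding trip LL_def by simp
  also have "\<dots> = H (p-1) * t21 (p-1) + t31 (p-1) + t4 (p-1)" by (rule ident)
  also have "\<dots> = (?N^4 * (H (p-1) * t21 (p-1) + t31 (p-1) + t4 (p-1))) / ?N^4"
    using N0 by simp
  also have "?N^4 * (H (p-1) * t21 (p-1) + t31 (p-1) + t4 (p-1)) =
      (?N * H (p-1)) * (?N^3 * t21 (p-1)) + ?N^4 * t31 (p-1) + ?N^4 * t4 (p-1)"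
    by (simp add: algebra_simps eval_nat_numeral)
  also have "\<dots> = of_int c" unfolding NH[OF order_refl] Nt21 Nt31 Nt4 c_def by simp
  finally have eq: "(\<Sum>k=1..p-1. (H k)^2 / (of_nat k)^2) -
           (- (\<Sum>(i,j,k)\<in>{(i,j,k). 1 \<le> i \<and> i < j \<and> j < k \<and> k \<le> p-1}.
                 1 / (of_nat i * (of_nat j)^2 * of_nat k))) = of_int c / of_int ((NN p)^4)" by simp
  have dc: "int p dvd c" unfolding c_def
    using EE_dvd[OF assms] AA_dvd[OF assms] BB_dvd[OF assms] by simp
  have nd: "\<not> int p dvd (NN p)^4"
  proof
    assume "int p dvd (NN p)^4"
    moreover have pr: "prime (int p)" using assms(1) by simp
    ultimately have "int p dvd NN p" using prime_dvd_power by blast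
    then have "p dvd fact (p-1)" unfolding NN_def by (metis int_dvd_int_iff of_nat_fact)
    then have "p \<le> p - 1" using prime_dvd_fact_iff[OF assms(1)] by blast
    then show False using prime_gt_0_nat[OF assms(1)] by linarith
  qed
  show ?thesis unfolding rat_cong_def using eq dc nd by blast
qed

end
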